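(* Let $Q:(-\infty,-1)\to(-\infty,0)$ be the inverse of the strictly increasing function $G\mapsto G-e^G$ on $(-\infty,0)$, and define $R:\mathbb{R}\to\mathbb{R}$ by $R(V)=-2(1-e^{Q(V)})^2$ for $V<-1$ and $R(V)=4(V+1)$ for $V\ge -1$. Then, up to translations $s\mapsto s+s_0$, the two-point boundary value problem $$V''-3V'=R(V),\ s\in(-\infty,\infty),\qquad V(-\infty)=-1,\quad V(\infty)=-\infty$$ has a unique solution; that is, if $V_1,V_2$ are two solutions, there exists $s_0\in\mathbb{R}$ with $V_1(s)=V_2(s+s_0)$ for all $s$.
   Context: Here prime denotes $d/ds$, and $V(-\infty)$, $V(\infty)$ denote the limits as $s\to-\infty$, $s\to\infty$. *)

theory Defs
  imports "HOL-Analysis.Analysis"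
begin

definition Q :: "real \<Rightarrow> real" where
  "Q V = (THE G. G < 0 \<and> G - exp G = V)"

definition R :: "real \<Rightarrow> real" where
  "R V = (if V < -1 then -2 * (1 - exp (Q V))^2 else 4 * (V + 1))"

definition is_bvp_solution :: "(real \<Rightarrow> real) \<Rightarrow> bool" where
  "is_bvp_solution V \<longleftrightarrow>
     (\<exists>V1 V2. (\<forall>s. (V has_real_derivative V1 s) (at s)
                  \<and> (V1 has_real_derivative V2 s) (at s)
                  \<and> V2 s - 3 * V1 s = R (V s)))
     \<and> (V \<longlongrightarrow> -1) at_bot
     \<and> filterlim V at_bot at_top"

end

theory Submission
  imports Defs
begin


definition phi :: "real \<Rightarrow> real" where "phi G = G - exp G"

lemma exp_strict: "(x::real) \<noteq> 0 \<Longrightarrow> 1 + x < exp x"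
  using exp_minus_greater[of "-x"] by simp

lemma phi_lt: "G < 0 \<Longrightarrow> phi G < -1"
  unfolding phi_def using exp_strict[of G] by simp

lemma phi_strict: assumes "G1 < G2" "G2 < 0" shows "phi G1 < phi G2"
proof -
  have "\<And>x. G1 \<le> x \<Longrightarrow> x \<le> G2 \<Longrightarrow> \<exists>y. DERIV phi x :> y \<and> 0 < y"
  proof -
    fix x assume "G1 \<le> x" "x \<le> G2"
    then have "x < 0" using assms by auto
    have "DERIV phi x :> 1 - exp x" unfolding phi_def by (auto intro!: derivative_eq_intros)
    moreover have "0 < 1 - exp x" using \<open>x<0\<close> by simp
    ultimately show "\<exists>y. DERIV phi x :> y \<and> 0 < y" by blast
  qed
  then show ?thesis using DERIV_pos_imp_increasing[of G1 G2 phi] assms by blast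
qed

lemma phi_inj: "G1 < 0 \<Longrightarrow> G2 < 0 \<Longrightarrow> phi G1 = phi G2 \<Longrightarrow> G1 = G2"
  using phi_strict by (metis linorder_neqE_linordered_idom order_less_irrefl)

lemma phi_ex: assumes "V < -1" shows "\<exists>G. G < 0 \<and> phi G = V"
proof -
  have c: "\<forall>x. V \<le> x \<and> x \<le> 0 \<longrightarrow> isCont phi x" unfolding phi_def by (auto intro!: continuous_intros)
  have "phi V \<le> V" unfolding phi_def by simp
  moreover have "V \<le> phi 0" unfolding phi_def using assms by simp
  ultimately obtain G where G: "V \<le> G" "G \<le> 0" "phi G = V"
    using IVT[of phi V V 0] c assms by auto
  have "G \<noteq> 0" using G assms unfolding phi_def by auto
  then show ?thesis using G by (intro exI[of _ G]) auto
qed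

lemma Q_spec: assumes "V < -1" shows "Q V < 0" "phi (Q V) = V"
proof -
  obtain G where G: "G < 0" "phi G = V" using phi_ex[OF assms] by blast
  have "Q V = G" unfolding Q_def
    apply (rule the_equality)
    using G phi_inj unfolding phi_def by auto
  then show "Q V < 0" "phi (Q V) = V" using G by auto
qed

lemma Q_phi: "G < 0 \<Longrightarrow> Q (phi G) = G"
  using Q_spec[of "phi G"] phi_lt[of G] phi_inj by auto

lemma isCont_Q: assumes "V < -1" shows "isCont Q V"
proof -
  define G where "G = Q V"
  have G: "G < 0" "phi G = V" using Q_spec[OF assms] G_def by auto
  have "isCont Q (phi G)"
  proof (rule isCont_inverse_function[where d="-G/2" and f=phi and g=Q and x=G])
    show "0 < -G/2" using G by simp
    fix z assume "\<bar>z - G\<bar> \<le> -G/2"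
    then have "z < 0" using G by auto
    then show "Q (phi z) = z" by (rule Q_phi)
    show "isCont phi z" unfolding phi_def by (auto intro!: continuous_intros)
  qed
  then show ?thesis using G by simp
qed

lemma R_neg: "V < -1 \<Longrightarrow> R V < 0"
  unfolding R_def using Q_spec[of V] by simp

lemma R_nonpos: "V \<le> -1 \<Longrightarrow> R V \<le> 0"
  using R_neg[of V] unfolding R_def by (cases "V < -1") auto

lemma R_pos: "V > -1 \<Longrightarrow> R V > 0"
  unfolding R_def by simp

lemma k_le: fixes G :: real assumes "G < 0" shows "2 * (1 - exp G)^2 + 4 * (G - exp G + 1) \<le> 0"
proof -
  define k where "k = (\<lambda>G::real. 2 * (1 - exp G)^2 + 4 * (G - exp G + 1))"
  have "k G \<le> k 0"
  proof (rule DERIV_nonneg_imp_nondecreasing[of G 0 k])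
    show "G \<le> 0" using assms by simp
    fix x assume "G \<le> x" "x \<le> 0"
    have "DERIV k x :> 2 * (2 * (1 - exp x) * (- exp x)) + 4 * (1 - exp x)"
      unfolding k_def by (auto intro!: derivative_eq_intros)
    moreover have "2 * (2 * (1 - exp x) * (- exp x)) + 4 * (1 - exp x) = 4 * (1 - exp x)^2"
      by (simp add: algebra_simps power2_eq_square)
    ultimately show "\<exists>y. DERIV k x :> y \<and> 0 \<le> y" by auto
  qed
  then show ?thesis unfolding k_def by simp
qed

lemma R_ge: "V \<le> -1 \<Longrightarrow> 4 * (V + 1) \<le> R V"
proof (cases "V < -1")
  case True
  have "Q V < 0" "Q V - exp (Q V) = V" using Q_spec[OF True] unfolding phi_def by auto
  then show ?thesis using k_le[of "Q V"] True unfolding R_def by auto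
qed (auto simp: R_def)

lemma R_abs: "\<bar>R V\<bar> \<le> 4 * \<bar>V + 1\<bar>"
proof (cases "V \<le> -1")
  case True then show ?thesis using R_ge[of V] R_nonpos[of V] by auto
qed (auto simp: R_def)

lemma isCont_R: "isCont R V"
proof -
  consider "V < -1" | "V = -1" | "V > -1" by linarith
  then show ?thesis
  proof cases
    case 1
    have "isCont (\<lambda>x. -2 * (1 - exp (Q x))^2) V"
      using isCont_Q[OF 1] by (auto intro!: continuous_intros)
    moreover have "eventually (\<lambda>x. R x = -2 * (1 - exp (Q x))^2) (nhds V)"
      using eventually_nhds_in_open[of "{..<-1}" V] 1
      by (auto elim!: eventually_mono simp: R_def)
    ultimately show ?thesis using isCont_cong by metis
  next
    case 3
    have "isCont (\<lambda>x. 4 * (x + 1)) V" by (auto intro!: continuous_intros)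
    moreover have "eventually (\<lambda>x. R x = 4 * (x + 1)) (nhds V)"
      using eventually_nhds_in_open[of "{-1<..}" V] 3
      by (auto elim!: eventually_mono simp: R_def)
    ultimately show ?thesis using isCont_cong by metis
  next
    case 2
    have R0: "R V = 0" using 2 by (simp add: R_def)
    have "((\<lambda>x. 4 * \<bar>x + 1\<bar>) \<longlongrightarrow> 4 * \<bar>V + 1\<bar>) (at V)"
      by (auto intro!: tendsto_intros)
    then have t: "((\<lambda>x. 4 * \<bar>x + 1\<bar>) \<longlongrightarrow> 0) (at V)" using 2 by simp
    have "(R \<longlongrightarrow> 0) (at V)"
      by (rule Lim_null_comparison[OF _ t]) (auto intro!: always_eventually simp: R_abs)
    then show ?thesis using R0 by (simp add: isCont_def)
  qed
qed



definition r :: "real \<Rightarrow> real" where "r z = - R (-1 - z)"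

lemma r_nonneg: "z \<ge> 0 \<Longrightarrow> r z \<ge> 0"
  unfolding r_def using R_nonpos[of "-1-z"] by simp
lemma r_pos: "z > 0 \<Longrightarrow> r z > 0"
  unfolding r_def using R_neg[of "-1-z"] by simp
lemma r_le: "z \<ge> 0 \<Longrightarrow> r z \<le> 4 * z"
  unfolding r_def using R_ge[of "-1-z"] by simp
lemma isCont_r: "isCont r z"
  unfolding r_def using isCont_R by (auto intro!: continuous_intros isCont_o2[OF _ isCont_R])

lemma inv_deriv:
  fixes h g h' :: "real \<Rightarrow> real"
  assumes A: "open A" and B: "open B"
    and hd: "\<And>x. x \<in> A \<Longrightarrow> (h has_real_derivative h' x) (at x)"
    and gh: "\<And>x. x \<in> A \<Longrightarrow> g (h x) = x"
    and gA: "\<And>z. z \<in> B \<Longrightarrow> g z \<in> A"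
    and hg: "\<And>z. z \<in> B \<Longrightarrow> h (g z) = z"
    and z: "z \<in> B"
    and nz: "h' (g z) \<noteq> 0"
  shows "(g has_real_derivative inverse (h' (g z))) (at z)"
proof -
  define x where "x = g z"
  have xA: "x \<in> A" using gA[OF z] x_def by simp
  obtain d where d: "d > 0" "ball x d \<subseteq> A" using A xA open_contains_ball by blast
  have "isCont g (h x)"
  proof (rule isCont_inverse_function[where d="d/2" and f=h and g=g and x=x])
    show "0 < d/2" using d by simp
    fix w assume "\<bar>w - x\<bar> \<le> d/2"
    then have "dist x w < d" using d by (simp add: dist_real_def abs_minus_commute)
    then have "w \<in> A" using d by auto
    then show "g (h w) = w" "isCont h w" using gh hd DERIV_isCont by blast+
  qed
  then have cg: "isCont g z" using hg[OF z] x_def by simp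
  obtain e where e: "e > 0" "ball z e \<subseteq> B" using B z open_contains_ball by blast
  show ?thesis
  proof (rule DERIV_inverse_function[where f=h and a="z-e" and b="z+e"])
    show "DERIV h (g z) :> h' (g z)" using hd xA x_def by simp
    show "h' (g z) \<noteq> 0" by (rule nz)
    show "z - e < z" "z < z + e" using e by auto
    fix w assume "z - e < w" "w < z + e"
    then have "dist z w < e" by (simp add: dist_real_def abs_less_iff)
    then have "w \<in> B" using e by auto
    then show "h (g w) = w" by (rule hg)
  qed (rule cg)
qed

locale sol =
  fixes f f1 f2 :: "real \<Rightarrow> real"
  assumes d1: "\<And>s. (f has_real_derivative f1 s) (at s)"
    and d2: "\<And>s. (f1 has_real_derivative f2 s) (at s)"
    and eq: "\<And>s. f2 s - 3 * f1 s = R (f s)"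
    and lim_bot: "(f \<longlongrightarrow> -1) at_bot"
    and lim_top: "filterlim f at_bot at_top"
begin

lemma cont_f: "continuous_on S f"
  using d1 DERIV_isCont by (blast intro: continuous_at_imp_continuous_on)

lemma ev_bot: "c < -1 \<Longrightarrow> \<exists>N. \<forall>s\<le>N. c < f s"
  using order_tendstoD(1)[OF lim_bot, of c] by (simp add: eventually_at_bot_linorder)

lemma ev_bot2: "c > -1 \<Longrightarrow> \<exists>N. \<forall>s\<le>N. f s < c"
  using order_tendstoD(2)[OF lim_bot, of c] by (simp add: eventually_at_bot_linorder)

lemma ev_top: "\<exists>N. \<forall>s\<ge>N. f s < c"
  using lim_top unfolding filterlim_at_bot_dense by (simp add: eventually_at_top_linorder)

lemma f_le: "f s \<le> -1"
proof (rule ccontr)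
  assume "\<not> f s \<le> -1"
  then have c: "f s > -1" by simp
  obtain A where A: "\<forall>t\<le>A. f t < f s" using ev_bot2[OF c] by blast
  obtain B where B: "\<forall>t\<ge>B. f t < f s" using ev_top by blast
  have "A < s" "s < B" using A B by (meson less_irrefl not_le)+
  obtain m where m: "m \<in> {A..B}" "\<forall>t\<in>{A..B}. f t \<le> f m"
    using continuous_attains_sup[of "{A..B}" f] cont_f \<open>A < s\<close> \<open>s < B\<close> by auto
  have fsm: "f s \<le> f m" using m \<open>A < s\<close> \<open>s < B\<close> by auto
  have glob: "\<forall>t. f t \<le> f m"
  proof
    fix t show "f t \<le> f m"
      using m(2)[rule_format, of t] A[rule_format, of t] B[rule_format, of t] fsm
      by (cases "t \<le> A"; cases "t \<ge> B") auto
  qed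
  have f1m: "f1 m = 0" using DERIV_local_max[OF d1[of m], of 1] glob by auto
  have "f2 m > 0" using eq[of m] f1m R_pos[of "f m"] c fsm by simp
  then obtain d where d: "d > 0" "\<forall>h>0. h < d \<longrightarrow> f1 m < f1 (m + h)"
    using DERIV_pos_inc_right[OF d2[of m]] by blast
  obtain z where z: "m < z" "z < m + d/2" "f (m + d/2) - f m = (m + d/2 - m) * f1 z"
    using MVT2[of m "m + d/2" f f1] d1 d by auto
  have "f1 z > 0" using d(2)[rule_format, of "z - m"] z f1m d by auto
  then have "d * f1 z > 0" using d by simp
  then have "f (m + d/2) > f m" using z by (simp add: algebra_simps)
  then show False using glob by (meson not_le)
qed

definition u where "u s = exp (-3 * s) * f1 s"

lemma u_deriv: "(u has_real_derivative exp (-3 * s) * R (f s)) (at s)"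
proof -
  have "(u has_real_derivative (exp (-3 * s) * (-3)) * f1 s + exp (-3 * s) * f2 s) (at s)"
    unfolding u_def by (auto intro!: derivative_eq_intros d2)
  moreover have "(exp (-3 * s) * (-3)) * f1 s + exp (-3 * s) * f2 s = exp (-3 * s) * R (f s)"
    using eq[of s] by (simp add: algebra_simps)
  ultimately show ?thesis by simp
qed

lemma u_mono: assumes "s \<le> t" shows "u t \<le> u s"
proof (rule DERIV_nonpos_imp_nonincreasing[of s t u])
  show "s \<le> t" by (rule assms)
  fix x
  have "exp (-3 * x) * R (f x) \<le> 0" using R_nonpos[OF f_le[of x]] by (simp add: mult_le_0_iff)
  then show "\<exists>y. DERIV u x :> y \<and> y \<le> 0" using u_deriv[of x] by blast
qed

lemma f1_eq: "f1 s = exp (3 * s) * u s"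
  unfolding u_def by (simp add: mult.assoc[symmetric] exp_add[symmetric])

lemma inc_of_pos: "x < y \<Longrightarrow> (\<And>t. x \<le> t \<Longrightarrow> t \<le> y \<Longrightarrow> f1 t > 0) \<Longrightarrow> f x < f y"
  using DERIV_pos_imp_increasing[of x y f] d1 by blast

lemma f1_le: "f1 s \<le> 0"
proof (rule ccontr)
  assume "\<not> f1 s \<le> 0"
  then have "u s > 0" unfolding u_def by simp
  then have pos: "\<And>t. t \<le> s \<Longrightarrow> f1 t > 0"
  proof -
    fix t assume "t \<le> s"
    then have "u t > 0" using u_mono[of t s] \<open>u s > 0\<close> by linarith
    then show "f1 t > 0" using f1_eq[of t] by simp
  qed
  have "f (s - 1) < f s" by (rule inc_of_pos) (simp_all add: pos)
  then have c: "f (s - 1) < -1" using f_le[of s] by simp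
  obtain N where N: "\<forall>t\<le>N. f (s - 1) < f t" using ev_bot[OF c] by blast
  define t where "t = min N (s - 2)"
  have "f t < f (s - 1)" by (rule inc_of_pos) (simp_all add: pos t_def)
  moreover have "f (s - 1) < f t" using N t_def by simp
  ultimately show False by simp
qed

lemma f1_lt: "f1 s < 0"
proof (rule ccontr)
  assume "\<not> f1 s < 0"
  then have f1s: "f1 s = 0" using f1_le[of s] by simp
  then have us: "u s = 0" unfolding u_def by simp
  have z1: "\<And>t. t \<le> s \<Longrightarrow> f1 t = 0"
  proof -
    fix t assume "t \<le> s"
    then have "u t \<ge> 0" using u_mono[of t s] us by simp
    then have "f1 t \<ge> 0" using f1_eq[of t] by simp
    then show "f1 t = 0" using f1_le[of t] by simp
  qed
  have cst: "\<And>t. t \<le> s \<Longrightarrow> f t = f s"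
  proof -
    fix t assume ts: "t \<le> s"
    have dd: "DERIV f x :> 0" if "t \<le> x" "x \<le> s" for x
    proof -
      have "f1 x = 0" using z1 that by simp
      then show ?thesis using d1[of x] by simp
    qed
    have "f t \<le> f s" by (rule DERIV_nonneg_imp_nondecreasing[of t s f]) (use ts dd in auto)
    moreover have "f t \<ge> f s" by (rule DERIV_nonpos_imp_nonincreasing[of t s f]) (use ts dd in auto)
    ultimately show "f t = f s" by simp
  qed
  have "(f \<longlongrightarrow> f s) at_bot"
  proof (rule tendsto_eventually)
    show "eventually (\<lambda>t. f t = f s) at_bot" unfolding eventually_at_bot_linorder using cst by blast
  qed
  have fs: "f s = -1" by (rule tendsto_unique[OF _ \<open>(f \<longlongrightarrow> f s) at_bot\<close> lim_bot]) simp
  define h where "h t = exp (-4 * t) * ((-1 - f t) + (- f1 t))" for t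
  have hd: "(h has_real_derivative exp (-4 * t) * (4 * (f t + 1) - R (f t))) (at t)" for t
  proof -
    have "(h has_real_derivative (exp (-4 * t) * (-4)) * ((-1 - f t) + (- f1 t))
            + exp (-4 * t) * (- f1 t - f2 t)) (at t)"
      unfolding h_def by (auto intro!: derivative_eq_intros d1 d2)
    moreover have "(exp (-4 * t) * (-4)) * ((-1 - f t) + (- f1 t))
            + exp (-4 * t) * (- f1 t - f2 t) = exp (-4 * t) * (4 * (f t + 1) - R (f t))"
      using eq[of t] by (simp add: algebra_simps)
    ultimately show ?thesis by simp
  qed
  have hs: "h s = 0" unfolding h_def using fs f1s by simp
  have fm1: "\<And>t. t \<ge> s \<Longrightarrow> f t = -1"
  proof -
    fix t assume ts: "t \<ge> s"
    have "h t \<le> h s"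
    proof (rule DERIV_nonpos_imp_nonincreasing[of s t h])
      show "s \<le> t" by (rule ts)
      fix x
      have "4 * (f x + 1) - R (f x) \<le> 0" using R_ge[OF f_le[of x]] by simp
      then have "exp (-4 * x) * (4 * (f x + 1) - R (f x)) \<le> 0"
        by (simp add: mult_le_0_iff)
      then show "\<exists>y. DERIV h x :> y \<and> y \<le> 0" using hd[of x] by blast
    qed
    then have "(-1 - f t) + (- f1 t) \<le> 0" using hs unfolding h_def
      by (simp add: mult_le_0_iff)
    then show "f t = -1" using f_le[of t] f1_le[of t] by simp
  qed
  obtain N where N: "\<forall>t\<ge>N. f t < -2" using ev_top by blast
  have "f (max N s) = -1" by (rule fm1) simp
  moreover have "f (max N s) < -2" using N by simp
  ultimately show False by simp
qed

lemma f_strict: "x < y \<Longrightarrow> f y < f x"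
  using DERIV_neg_imp_decreasing[of x y f] d1 f1_lt by blast

lemma f_lt: "f s < -1"
  using f_strict[of "s - 1" s] f_le[of "s - 1"] by simp

lemma f1_small: "\<epsilon> > 0 \<Longrightarrow> \<exists>S. \<forall>s\<le>S. - f1 s < \<epsilon>"
proof -
  assume e: "\<epsilon> > 0"
  define a where "a = \<bar>u 0\<bar>"
  define S where "S = min 0 (ln (\<epsilon> / (a + 1)) / 3)"
  have "\<forall>s\<le>S. - f1 s < \<epsilon>"
  proof (intro allI impI)
    fix s assume sS: "s \<le> S"
    have "u s \<ge> u 0" using u_mono sS S_def by simp
    then have "- u s \<le> a" using f1_le[of s] f1_eq[of s] a_def
      by linarith
    have "u s \<le> 0" using f1_le[of s] f1_eq[of s] by (simp add: mult_le_0_iff)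
    have "exp (3 * s) \<le> exp (3 * S)" using sS by simp
    also have "\<dots> \<le> exp (ln (\<epsilon> / (a + 1)))" unfolding S_def by (simp add: min_def)
    also have "\<dots> = \<epsilon> / (a + 1)" using e a_def by simp
    finally have ex: "exp (3 * s) \<le> \<epsilon> / (a + 1)" .
    have "- f1 s = exp (3 * s) * (- u s)" using f1_eq[of s] by simp
    also have "\<dots> \<le> (\<epsilon> / (a + 1)) * a"
      using ex \<open>- u s \<le> a\<close> a_def e \<open>u s \<le> 0\<close> by (intro mult_mono) auto
    also have "\<dots> < \<epsilon>" using e a_def by (simp add: field_simps)
    finally show "- f1 s < \<epsilon>" .
  qed
  then show ?thesis by blast
qed

end



context sol begin

lemma f_inj: "f x = f y \<Longrightarrow> x = y"
  using f_strict by (metis linorder_neqE_linordered_idom order_less_irrefl)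

lemma f_surj: assumes "z > 0" shows "\<exists>s. f s = -1 - z"
proof -
  obtain N where N: "\<forall>s\<le>N. -1 - z < f s" using ev_bot[of "-1 - z"] assms by auto
  obtain M where M: "\<forall>s\<ge>M. f s < -1 - z" using ev_top by blast
  have "f (max N M) \<le> -1 - z" using M by (simp add: less_imp_le)
  moreover have "-1 - z \<le> f (min N M)" using N by (simp add: less_imp_le)
  ultimately have "\<exists>x. min N M \<le> x \<and> x \<le> max N M \<and> f x = -1 - z"
    by (intro IVT2' cont_f) auto
  then show ?thesis by blast
qed

definition tau where "tau z = (THE s. f s = -1 - z)"

lemma tau1: assumes "z > 0" shows "f (tau z) = -1 - z"
proof -
  obtain s where s: "f s = -1 - z" using f_surj[OF assms] by blast
  have "tau z = s" unfolding tau_def by (rule the_equality) (use s f_inj in auto)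
  then show ?thesis using s by simp
qed

lemma tau2: "tau (-1 - f s) = s"
  unfolding tau_def using f_inj by (intro the_equality) auto

lemma tau_deriv: assumes "z > 0"
  shows "(tau has_real_derivative inverse (- f1 (tau z))) (at z)"
proof (rule inv_deriv[where h="\<lambda>s. -1 - f s" and h'="\<lambda>s. - f1 s" and A=UNIV and B="{0<..}"])
  fix x :: real
  show "((\<lambda>s. -1 - f s) has_real_derivative - f1 x) (at x)"
    by (auto intro!: derivative_eq_intros d1)
  show "tau (-1 - f x) = x" by (rule tau2)
next
  fix w :: real assume "w \<in> {0<..}"
  then show "-1 - f (tau w) = w" using tau1 by simp
next
  show "- f1 (tau z) \<noteq> 0" using f1_lt[of "tau z"] by simp
qed (use assms in auto)

lemma P_pos: "- f1 (tau z) > 0"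
  using f1_lt by simp

lemma P_deriv: assumes "z > 0"
  shows "((\<lambda>z. - f1 (tau z)) has_real_derivative 3 + r z / (- f1 (tau z))) (at z)"
proof -
  have "((\<lambda>z. f1 (tau z)) has_real_derivative f2 (tau z) * inverse (- f1 (tau z))) (at z)"
    by (rule DERIV_chain2[OF d2 tau_deriv[OF assms]])
  then have "((\<lambda>z. - f1 (tau z)) has_real_derivative - (f2 (tau z) * inverse (- f1 (tau z)))) (at z)"
    by (rule DERIV_minus)
  moreover have "- (f2 (tau z) * inverse (- f1 (tau z))) = 3 + r z / (- f1 (tau z))"
  proof -
    have "f2 (tau z) = 3 * f1 (tau z) + R (-1 - z)" using eq[of "tau z"] tau1[OF assms] by simp
    moreover have "f1 (tau z) \<noteq> 0" using f1_lt[of "tau z"] by simp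
    ultimately show ?thesis unfolding r_def by (simp add: field_simps)
  qed
  ultimately show ?thesis by simp
qed

lemma P_small: assumes "\<epsilon> > 0" shows "\<exists>\<delta>>0. \<forall>z. 0 < z \<and> z < \<delta> \<longrightarrow> - f1 (tau z) < \<epsilon>"
proof -
  obtain S where S: "\<forall>s\<le>S. - f1 s < \<epsilon>" using f1_small[OF assms] by blast
  define \<delta> where "\<delta> = -1 - f S"
  have "\<delta> > 0" using f_lt[of S] \<delta>_def by simp
  moreover have "\<forall>z. 0 < z \<and> z < \<delta> \<longrightarrow> - f1 (tau z) < \<epsilon>"
  proof (intro allI impI)
    fix z assume z: "0 < z \<and> z < \<delta>"
    have "tau z \<le> S"
    proof (rule ccontr)
      assume "\<not> tau z \<le> S"
      then have "f (tau z) < f S" using f_strict by simp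
      then show False using tau1[of z] z \<delta>_def by simp
    qed
    then show "- f1 (tau z) < \<epsilon>" using S by simp
  qed
  ultimately show ?thesis by blast
qed

end

lemma P_unique:
  fixes Pa Pb :: "real \<Rightarrow> real"
  assumes p1: "\<And>z. z > 0 \<Longrightarrow> Pa z > 0" and p2: "\<And>z. z > 0 \<Longrightarrow> Pb z > 0"
    and d1: "\<And>z. z > 0 \<Longrightarrow> (Pa has_real_derivative 3 + r z / Pa z) (at z)"
    and d2: "\<And>z. z > 0 \<Longrightarrow> (Pb has_real_derivative 3 + r z / Pb z) (at z)"
    and s1: "\<And>\<epsilon>. \<epsilon> > 0 \<Longrightarrow> \<exists>\<delta>>0. \<forall>z. 0 < z \<and> z < \<delta> \<longrightarrow> Pa z < \<epsilon>"
    and s2: "\<And>\<epsilon>. \<epsilon> > 0 \<Longrightarrow> \<exists>\<delta>>0. \<forall>z. 0 < z \<and> z < \<delta> \<longrightarrow> Pb z < \<epsilon>"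
    and z: "z > 0"
  shows "Pa z = Pb z"
proof (rule ccontr)
  assume ne: "Pa z \<noteq> Pb z"
  define g where "g w = (Pa w - Pb w)^2" for w
  have gd: "(g has_real_derivative 2 * (Pa w - Pb w) * ((3 + r w / Pa w) - (3 + r w / Pb w))) (at w)"
    if "w > 0" for w
    unfolding g_def using d1[OF that] d2[OF that] by (auto intro!: derivative_eq_intros)
  have gneg: "2 * (Pa w - Pb w) * ((3 + r w / Pa w) - (3 + r w / Pb w)) \<le> 0" if "w > 0" for w
  proof -
    have a: "Pa w > 0" "Pb w > 0" using p1 p2 that by auto
    have "2 * (Pa w - Pb w) * ((3 + r w / Pa w) - (3 + r w / Pb w))
        = - (2 * r w * (Pa w - Pb w)^2 / (Pa w * Pb w))"
      using a by (simp add: field_simps power2_eq_square)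
    moreover have "2 * r w * (Pa w - Pb w)^2 / (Pa w * Pb w) \<ge> 0"
      using a r_nonneg[of w] that by simp
    ultimately show ?thesis by linarith
  qed
  define \<epsilon> where "\<epsilon> = \<bar>Pa z - Pb z\<bar>"
  have e: "\<epsilon> > 0" using ne \<epsilon>_def by simp
  obtain \<delta>1 where d1': "\<delta>1 > 0" "\<forall>z. 0 < z \<and> z < \<delta>1 \<longrightarrow> Pa z < \<epsilon>" using s1[OF e] by blast
  obtain \<delta>2 where d2': "\<delta>2 > 0" "\<forall>z. 0 < z \<and> z < \<delta>2 \<longrightarrow> Pb z < \<epsilon>" using s2[OF e] by blast
  define w where "w = min z (min \<delta>1 \<delta>2) / 2"
  have w: "w > 0" "w < \<delta>1" "w < \<delta>2" "w \<le> z" using z d1'(1) d2'(1) w_def by auto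
  have "g z \<le> g w"
  proof (rule DERIV_nonpos_imp_nonincreasing[of w z g])
    show "w \<le> z" by (rule w)
    fix x assume "w \<le> x" "x \<le> z"
    then have "x > 0" using w by simp
    then show "\<exists>y. DERIV g x :> y \<and> y \<le> 0" using gd gneg by blast
  qed
  moreover have "Pa w < \<epsilon>" "Pb w < \<epsilon>" using d1'(2) d2'(2) w by auto
  then have "\<bar>Pa w - Pb w\<bar> < \<epsilon>" using p1[of w] p2[of w] w by (simp add: abs_less_iff)
  then have "\<bar>Pa w - Pb w\<bar>^2 < \<epsilon>^2" by (rule power_strict_mono) simp_all
  then have "g w < \<epsilon>^2" unfolding g_def by simp
  moreover have "g z = \<epsilon>^2" unfolding g_def \<epsilon>_def by simp
  ultimately show False by simp
qed

lemma uniq: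
  assumes "sol f f1 f2" "sol g g1 g2"
  shows "\<exists>s0. \<forall>s. f s = g (s + s0)"
proof -
  interpret S1: sol f f1 f2 by (rule assms(1))
  interpret S2: sol g g1 g2 by (rule assms(2))
  have PP: "- f1 (S1.tau z) = - g1 (S2.tau z)" if "z > 0" for z
    apply (rule P_unique[where Pa="\<lambda>z. - f1 (S1.tau z)" and Pb="\<lambda>z. - g1 (S2.tau z)"])
    apply (rule S1.P_pos)
    apply (rule S2.P_pos)
    apply (erule S1.P_deriv)
    apply (erule S2.P_deriv)
    apply (erule S1.P_small)
    apply (erule S2.P_small)
    apply (rule that)
    done
  define D where "D z = S1.tau z - S2.tau z" for z
  have Dd: "(D has_real_derivative 0) (at z)" if "z > 0" for z
  proof -
    have "(D has_real_derivative inverse (- f1 (S1.tau z)) - inverse (- g1 (S2.tau z))) (at z)"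
      unfolding D_def using S1.tau_deriv[OF that] S2.tau_deriv[OF that] by (rule DERIV_diff)
    then show ?thesis using PP[OF that] by simp
  qed
  have Dc: "D z = D 1" if "z > 0" for z
  proof (cases "z = 1")
    case False
    define a where "a = min z 1"
    define b where "b = max z 1"
    have ab: "a < b" "a > 0" using False that a_def b_def by auto
    have cont: "continuous_on {a..b} D"
    proof (intro continuous_at_imp_continuous_on ballI)
      fix x assume "x \<in> {a..b}"
      then have "x > 0" using ab by simp
      then show "isCont D x" using Dd DERIV_isCont by blast
    qed
    have "D z = D a" using DERIV_isconst2[OF ab(1) cont, of z] Dd ab a_def b_def by auto
    moreover have "D 1 = D a" using DERIV_isconst2[OF ab(1) cont, of 1] Dd ab a_def b_def by auto
    ultimately show ?thesis by simp
  qed simp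
  have "\<forall>s. f s = g (s + (- D 1))"
  proof
    fix s
    define z where "z = -1 - f s"
    have z: "z > 0" using S1.f_lt[of s] z_def by simp
    have t1: "S1.tau z = s" using S1.tau2 z_def by simp
    have "S2.tau z = s - D 1" using Dc[OF z] t1 D_def by simp
    then have "g (s - D 1) = -1 - z" using S2.tau1[OF z] by simp
    then show "f s = g (s + (- D 1))" using z_def by simp
  qed
  then show ?thesis by blast
qed



definition Fi :: "(real \<Rightarrow> real) \<Rightarrow> real \<Rightarrow> real" where
  "Fi E t = 3 * sqrt (2 * E t) + r t"

definition T :: "(real \<Rightarrow> real) \<Rightarrow> real \<Rightarrow> real" where
  "T E y = integral {0..y} (Fi E)"

definition Mset :: "(real \<Rightarrow> real) set" where
  "Mset = {E. mono_on {0..} E \<and> (\<forall>y\<ge>0. 0 \<le> E y \<and> E y \<le> 8 * y^2)}"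

lemma cont_r_on: "continuous_on S r"
  using isCont_r by (blast intro: continuous_at_imp_continuous_on)

lemma Fi_integrable: assumes "E \<in> Mset" shows "Fi E integrable_on {0..y}"
proof -
  have m: "mono_on {0..} E" using assms unfolding Mset_def by blast
  have "mono_on {0..y} (\<lambda>t. 3 * sqrt (2 * E t))"
  proof (rule mono_onI)
    fix a b assume "a \<in> {0..y}" "b \<in> {0..y}" "a \<le> b"
    then have "E a \<le> E b" using m by (auto simp: mono_on_def)
    then show "3 * sqrt (2 * E a) \<le> 3 * sqrt (2 * E b)" by simp
  qed
  then have "(\<lambda>t. 3 * sqrt (2 * E t)) integrable_on {0..y}" by (rule integrable_on_mono_on)
  moreover have "r integrable_on {0..y}" using cont_r_on by (rule integrable_continuous_real)
  ultimately show ?thesis unfolding Fi_def by (rule integrable_add)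
qed

lemma Fi_nonneg: "E \<in> Mset \<Longrightarrow> t \<ge> 0 \<Longrightarrow> 0 \<le> Fi E t"
  unfolding Fi_def Mset_def using r_nonneg[of t] by simp

lemma T_mono: assumes "E \<in> Mset" "F \<in> Mset" "\<And>t. t \<ge> 0 \<Longrightarrow> E t \<le> F t"
  shows "T E y \<le> T F y"
  unfolding T_def
proof (rule integral_le[OF Fi_integrable[OF assms(1)] Fi_integrable[OF assms(2)]])
  fix x assume "x \<in> {0..y}"
  then have "E x \<le> F x" using assms(3) by simp
  then show "Fi E x \<le> Fi F x" unfolding Fi_def by simp
qed

lemma int_16: fixes y :: real assumes "y \<ge> 0" shows "integral {0..y} (\<lambda>t::real. 16 * t) = 8 * y^2"
proof -
  have "((\<lambda>t::real. 16 * t) has_integral ((\<lambda>t::real. 8 * t^2) y - (\<lambda>t::real. 8 * t^2) 0)) {0..y}"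
  proof (rule fundamental_theorem_of_calculus)
    show "0 \<le> y" by (rule assms)
    fix x :: real
    have "((\<lambda>t. 8 * t^2) has_real_derivative 16 * x) (at x within {0..y})"
      by (auto intro!: derivative_eq_intros)
    then show "((\<lambda>t. 8 * t^2) has_vector_derivative 16 * x) (at x within {0..y})"
      by (simp add: has_real_derivative_iff_has_vector_derivative)
  qed
  then have "((\<lambda>t::real. 16 * t) has_integral 8 * y^2) {0..y}" by simp
  then show ?thesis by (rule integral_unique)
qed

lemma T_bound: assumes "E \<in> Mset" "y \<ge> 0" shows "T E y \<le> 8 * y^2"
proof -
  have "T E y \<le> integral {0..y} (\<lambda>t. 16 * t)"
    unfolding T_def
  proof (rule integral_le[OF Fi_integrable[OF assms(1)]])
    show "(\<lambda>t. 16 * t) integrable_on {0..y}" by (intro integrable_continuous_real continuous_intros)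
    fix x assume x: "x \<in> {0..y}"
    then have "E x \<le> 8 * x^2" using assms(1) unfolding Mset_def by auto
    then have "2 * E x \<le> (4 * x)^2" by (simp add: power2_eq_square)
    then have "sqrt (2 * E x) \<le> sqrt ((4 * x)^2)" by (rule real_sqrt_le_mono)
    moreover have "sqrt ((4 * x)^2) = \<bar>4 * x\<bar>" by (rule real_sqrt_abs)
    moreover have "\<bar>4 * x\<bar> = 4 * x" using x by simp
    ultimately have "sqrt (2 * E x) \<le> 4 * x" by linarith
    then show "Fi E x \<le> 16 * x" unfolding Fi_def using r_le[of x] x by simp
  qed
  then show ?thesis using int_16[OF assms(2)] by simp
qed

lemma T_in: assumes "E \<in> Mset" shows "T E \<in> Mset"
proof -
  have nn: "0 \<le> T E y" if "y \<ge> 0" for y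
    unfolding T_def using Fi_integrable[OF assms] Fi_nonneg[OF assms] by (intro integral_nonneg) auto
  have "mono_on {0..} (T E)"
  proof (rule mono_onI)
    fix a b :: real assume ab: "a \<in> {0..}" "b \<in> {0..}" "a \<le> b"
    have "integral {0..a} (Fi E) + integral {a..b} (Fi E) = integral {0..b} (Fi E)"
      by (rule Henstock_Kurzweil_Integration.integral_combine) (use ab Fi_integrable[OF assms, of b] in auto)
    moreover have "0 \<le> integral {a..b} (Fi E)"
    proof (rule integral_nonneg)
      show "Fi E integrable_on {a..b}"
        by (rule integrable_subinterval_real[OF Fi_integrable[OF assms, of b]]) (use ab in auto)
    qed (use ab Fi_nonneg[OF assms] in auto)
    ultimately show "T E a \<le> T E b" unfolding T_def by simp
  qed
  then show ?thesis using nn T_bound[OF assms] unfolding Mset_def by auto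
qed

lemma fixpoint: "\<exists>E\<in>Mset. \<forall>y\<ge>0. T E y = E y"
proof -
  define S where "S = {E\<in>Mset. \<forall>y\<ge>0. T E y \<le> E y}"
  define q where "q = (\<lambda>t::real. 8 * t^2)"
  have qM: "q \<in> Mset" unfolding Mset_def q_def
    by (auto intro!: mono_onI power_mono)
  have qS: "q \<in> S" unfolding S_def using qM T_bound[OF qM] by (auto simp: q_def)
  then have Sne: "S \<noteq> {}" by auto
  define Es where "Es y = (INF E\<in>S. E y)" for y
  have bdd: "bdd_below ((\<lambda>E. E y) ` S)" if "y \<ge> 0" for y
    using that unfolding S_def Mset_def by (intro bdd_belowI[of _ 0]) auto
  have Es_le: "Es y \<le> E y" if "E \<in> S" "y \<ge> 0" for E y
    unfolding Es_def by (rule cINF_lower[OF bdd[OF that(2)] that(1)])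
  have Es_ge: "c \<le> Es y" if "\<And>E. E \<in> S \<Longrightarrow> c \<le> E y" for c y
    unfolding Es_def by (rule cINF_greatest[OF Sne]) (rule that)
  have EsM: "Es \<in> Mset"
  proof -
    have "mono_on {0..} Es"
    proof (rule mono_onI)
      fix a b :: real assume ab: "a \<in> {0..}" "b \<in> {0..}" "a \<le> b"
      show "Es a \<le> Es b"
      proof (rule Es_ge)
        fix E assume ES: "E \<in> S"
        then have "E a \<le> E b" using ab unfolding S_def Mset_def by (auto simp: mono_on_def)
        then show "Es a \<le> E b" using Es_le[OF ES, of a] ab by simp
      qed
    qed
    moreover have "0 \<le> Es y" if "y \<ge> 0" for y
      by (rule Es_ge) (use that in \<open>auto simp: S_def Mset_def\<close>)
    moreover have "Es y \<le> 8 * y^2" if "y \<ge> 0" for y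
      using Es_le[OF qS that] by (simp add: q_def)
    ultimately show ?thesis unfolding Mset_def by auto
  qed
  have TEs: "T Es y \<le> Es y" if "y \<ge> 0" for y
  proof (rule Es_ge)
    fix E assume ES: "E \<in> S"
    have EM: "E \<in> Mset" using ES S_def by simp
    have "T Es y \<le> T E y" by (rule T_mono[OF EsM EM]) (rule Es_le[OF ES])
    also have "\<dots> \<le> E y" using ES that S_def by simp
    finally show "T Es y \<le> E y" .
  qed
  have "T Es \<in> S"
  proof -
    have "T (T Es) y \<le> T Es y" if "y \<ge> 0" for y
      by (rule T_mono[OF T_in[OF EsM] EsM]) (rule TEs)
    then show ?thesis unfolding S_def using T_in[OF EsM] by auto
  qed
  then have "Es y \<le> T Es y" if "y \<ge> 0" for y using Es_le that by blast
  then show ?thesis using EsM TEs by (intro bexI[of _ Es]) (auto intro: antisym)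
qed



lemma existence: "\<exists>V. is_bvp_solution V"
proof -
  obtain E where EM: "E \<in> Mset" and fx: "\<And>y. y \<ge> 0 \<Longrightarrow> T E y = E y"
    using fixpoint by blast
  have Enn: "y \<ge> 0 \<Longrightarrow> 0 \<le> E y" for y using EM unfolding Mset_def by blast
  have Ele: "y \<ge> 0 \<Longrightarrow> E y \<le> 8 * y^2" for y using EM unfolding Mset_def by blast
  have E0: "E 0 = 0" using fx[of 0] unfolding T_def by simp
  have Econt: "continuous_on {0..b} E" for b
  proof (rule continuous_on_eq)
    show "continuous_on {0..b} (\<lambda>x. integral {0..x} (Fi E))"
      by (rule indefinite_integral_continuous_1[OF Fi_integrable[OF EM]])
    fix x assume "x \<in> {0..b}"
    then show "integral {0..x} (Fi E) = E x" using fx[of x] unfolding T_def by simp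
  qed
  have Ficont: "continuous_on {0..b} (Fi E)" for b
    unfolding Fi_def using Econt[of b] cont_r_on by (intro continuous_intros) auto
  have Ed: "(E has_real_derivative Fi E y) (at y)" if y: "y > 0" for y
  proof -
    have "((\<lambda>x. integral {0..x} (Fi E)) has_real_derivative Fi E y) (at y within {0..y+1})"
      by (rule integral_has_real_derivative[OF Ficont]) (use y in simp)
    moreover have "at y within {0..y+1} = at y"
      by (rule at_within_interior) (use y in simp)
    ultimately have "((\<lambda>x. integral {0..x} (Fi E)) has_real_derivative Fi E y) (at y)" by simp
    then show ?thesis
    proof (rule has_field_derivative_transform_within_open[where S="{0<..}"])
      show "open ({0<..} :: real set)" by simp
      show "y \<in> {0<..}" using y by simp
      fix x :: real assume "x \<in> {0<..}"
      then show "integral {0..x} (Fi E) = E x" using fx[of x] unfolding T_def by simp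
    qed
  qed
  have Fipos: "Fi E y > 0" if "y > 0" for y
  proof -
    have "0 \<le> sqrt (2 * E y)" using Enn[of y] that by simp
    then show ?thesis unfolding Fi_def using r_pos[OF that] by linarith
  qed
  have Epos: "E y > 0" if y: "y > 0" for y
  proof -
    have "E 0 < E y"
    proof (rule DERIV_pos_imp_increasing_open[OF y])
      fix x :: real assume "0 < x" "x < y"
      then show "\<exists>d. DERIV E x :> d \<and> d > 0" using Ed Fipos by blast
    qed (rule Econt)
    then show ?thesis using E0 by simp
  qed
  define P where "P y = sqrt (2 * E y)" for y
  have Ppos: "P y > 0" if "y > 0" for y unfolding P_def using Epos[OF that] by simp
  have Pd: "(P has_real_derivative 3 + r y / P y) (at y)" if y: "y > 0" for y
  proof -
    have d2: "((\<lambda>y. 2 * E y) has_real_derivative 2 * Fi E y) (at y)"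
      using Ed[OF y] by (rule DERIV_cmult)
    have "((\<lambda>y. sqrt (2 * E y)) has_real_derivative inverse (sqrt (2 * E y)) / 2 * (2 * Fi E y)) (at y)"
      by (rule DERIV_chain2[OF DERIV_real_sqrt d2]) (use Epos[OF y] in simp)
    moreover have "inverse (sqrt (2 * E y)) / 2 * (2 * Fi E y) = 3 + r y / P y"
      using Ppos[OF y] unfolding Fi_def P_def by (simp add: field_simps)
    ultimately show ?thesis unfolding P_def by simp
  qed
  have Ple: "P y \<le> 4 * y" if y: "y \<ge> 0" for y
  proof -
    have "2 * E y \<le> (4 * y)^2" using Ele[OF y] by (simp add: power2_eq_square)
    then have "P y \<le> sqrt ((4 * y)^2)" unfolding P_def by (rule real_sqrt_le_mono)
    moreover have "sqrt ((4 * y)^2) = \<bar>4 * y\<bar>" by (rule real_sqrt_abs)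
    ultimately show ?thesis using y by simp
  qed
  have Pcont: "isCont (\<lambda>x. 1 / P x) x" if "x > 0" for x
    using Pd[OF that] Ppos[OF that] by (intro continuous_intros DERIV_isCont) auto
  obtain \<sigma> where \<sigma>v: "\<forall>x::real. 0 < x \<longrightarrow> x < \<infinity> \<longrightarrow> (\<sigma> has_vector_derivative 1 / P x) (at x)"
    using einterval_antiderivative[of 0 "\<infinity>" "\<lambda>x. 1 / P x"] Pcont by auto
  have \<sigma>d: "(\<sigma> has_real_derivative 1 / P x) (at x)" if "x > 0" for x
    using \<sigma>v that by (simp add: has_real_derivative_iff_has_vector_derivative)

  have \<sigma>_strict: "\<sigma> a < \<sigma> b" if "0 < a" "a < b" for a b
  proof (rule DERIV_pos_imp_increasing[OF that(2)])
    fix x assume "a \<le> x" "x \<le> b"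
    then have "x > 0" using that by simp
    then show "\<exists>y. DERIV \<sigma> x :> y \<and> y > 0" using \<sigma>d Ppos by fastforce
  qed
  have \<sigma>_le: "\<sigma> a \<le> \<sigma> b" if "0 < a" "a \<le> b" for a b
    using \<sigma>_strict[of a b] that by (cases "a = b") auto
  define k where "k x = \<sigma> x - ln x / 4" for x
  have kd: "(k has_real_derivative 1 / P x - inverse x / 4) (at x)" if x: "x > 0" for x
  proof -
    have "(ln has_real_derivative inverse x) (at x)" by (rule DERIV_ln) (use x in simp)
    then have "((\<lambda>x. ln x / 4) has_real_derivative inverse x / 4) (at x)" by (rule DERIV_cdivide)
    then show ?thesis unfolding k_def by (rule DERIV_diff[OF \<sigma>d[OF x]])
  qed
  have knn: "1 / P x - inverse x / 4 \<ge> 0" if x: "x > 0" for x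
  proof -
    have "1 / (4 * x) \<le> 1 / P x" using Ple[of x] Ppos[OF x] x by (intro divide_left_mono) auto
    then show ?thesis using x by (simp add: field_simps)
  qed
  have k_mono: "k a \<le> k b" if "0 < a" "a \<le> b" for a b
  proof (rule DERIV_nonneg_imp_nondecreasing[OF that(2)])
    fix x assume "a \<le> x" "x \<le> b"
    then have "x > 0" using that by simp
    then show "\<exists>y. DERIV k x :> y \<and> y \<ge> 0" using kd knn by blast
  qed
  have \<sigma>_low: "\<sigma> y \<le> \<sigma> 1 + ln y / 4" if "0 < y" "y \<le> 1" for y
    using k_mono[OF that] unfolding k_def by simp
  have \<sigma>_high: "\<sigma> 1 + ln y / 4 \<le> \<sigma> y" if "1 \<le> y" for y
    using k_mono[of 1 y] that unfolding k_def by simp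
  have \<sigma>cont: "continuous_on {a..b} \<sigma>" if "a > 0" for a b
  proof (intro continuous_at_imp_continuous_on ballI)
    fix x assume "x \<in> {a..b}"
    then have "x > 0" using that by simp
    then show "isCont \<sigma> x" using \<sigma>d DERIV_isCont by blast
  qed
  have surj: "\<exists>y>0. \<sigma> y = s" for s
  proof -
    define a where "a = min 1 (exp (4 * (s - \<sigma> 1) - 4))"
    define b where "b = max 1 (exp (4 * (s - \<sigma> 1) + 4))"
    have a0: "a > 0" "a \<le> 1" using a_def by auto
    have b1: "b \<ge> 1" using b_def by auto
    have "ln a \<le> ln (exp (4 * (s - \<sigma> 1) - 4))" using a0 a_def by (subst ln_le_cancel_iff) auto
    then have "ln a \<le> 4 * (s - \<sigma> 1) - 4" by simp
    then have sa: "\<sigma> a \<le> s" using \<sigma>_low[OF a0] by simp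
    have "ln (exp (4 * (s - \<sigma> 1) + 4)) \<le> ln b" using b1 b_def by (subst ln_le_cancel_iff) auto
    then have "4 * (s - \<sigma> 1) + 4 \<le> ln b" by simp
    then have sb: "s \<le> \<sigma> b" using \<sigma>_high[OF b1] by simp
    have "\<exists>x. a \<le> x \<and> x \<le> b \<and> \<sigma> x = s"
      by (rule IVT'[where f=\<sigma> and a=a and b=b, OF sa sb]) (use a0 b1 \<sigma>cont[OF a0(1)] in auto)
    then obtain x where "a \<le> x" "\<sigma> x = s" by blast
    then show ?thesis using a0 by (intro exI[of _ x]) auto
  qed
  define ys where "ys s = (THE y. y > 0 \<and> \<sigma> y = s)" for s
  have \<sigma>_inj: "x = y" if "x > 0" "y > 0" "\<sigma> x = \<sigma> y" for x y
    using \<sigma>_strict that by (metis linorder_neqE_linordered_idom order_less_irrefl)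
  have ys_spec: "ys s > 0 \<and> \<sigma> (ys s) = s" for s
  proof -
    obtain y where y: "y > 0" "\<sigma> y = s" using surj by blast
    have "ys s = y" unfolding ys_def by (rule the_equality) (use y \<sigma>_inj in auto)
    then show ?thesis using y by simp
  qed
  have ys_\<sigma>: "ys (\<sigma> y) = y" if "y > 0" for y
    using ys_spec[of "\<sigma> y"] \<sigma>_inj that by blast
  have ysd: "(ys has_real_derivative P (ys s)) (at s)" for s
  proof -
    have "(ys has_real_derivative inverse (1 / P (ys s))) (at s)"
    proof (rule inv_deriv[where h=\<sigma> and h'="\<lambda>x. 1 / P x" and A="{0<..}" and B=UNIV])
      show "1 / P (ys s) \<noteq> 0" using Ppos ys_spec by (simp add: less_imp_neq[symmetric])
    qed (use \<sigma>d ys_\<sigma> ys_spec in auto)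
    then show ?thesis by simp
  qed
  define V where "V s = -1 - ys s" for s
  define V1 where "V1 s = - P (ys s)" for s
  define V2 where "V2 s = - (3 * P (ys s) + r (ys s))" for s
  have "\<forall>s. (V has_real_derivative V1 s) (at s) \<and> (V1 has_real_derivative V2 s) (at s)
             \<and> V2 s - 3 * V1 s = R (V s)"
  proof
    fix s
    have "(V has_real_derivative - P (ys s)) (at s)"
      unfolding V_def using ysd[of s] by (auto intro!: derivative_eq_intros)
    moreover have "((\<lambda>s. P (ys s)) has_real_derivative (3 + r (ys s) / P (ys s)) * P (ys s)) (at s)"
      by (rule DERIV_chain2[OF Pd ysd]) (use ys_spec in simp)
    then have "(V1 has_real_derivative - ((3 + r (ys s) / P (ys s)) * P (ys s))) (at s)"
      unfolding V1_def by (rule DERIV_minus)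
    moreover have "- ((3 + r (ys s) / P (ys s)) * P (ys s)) = V2 s"
      using Ppos[of "ys s"] ys_spec[of s] unfolding V2_def by (simp add: field_simps)
    moreover have "V2 s - 3 * V1 s = R (V s)" unfolding V2_def V1_def V_def r_def by simp
    ultimately show "(V has_real_derivative V1 s) (at s) \<and> (V1 has_real_derivative V2 s) (at s)
             \<and> V2 s - 3 * V1 s = R (V s)" unfolding V1_def by simp
  qed
  moreover have "(V \<longlongrightarrow> -1) at_bot"
  proof (rule tendstoI)
    fix e :: real assume e: "e > 0"
    have "\<forall>s\<le>\<sigma> (e/2). dist (V s) (-1) < e"
    proof (intro allI impI)
      fix s assume s: "s \<le> \<sigma> (e/2)"
      have "ys s \<le> e/2"
      proof (rule ccontr)
        assume "\<not> ys s \<le> e/2"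
        then have "\<sigma> (e/2) < \<sigma> (ys s)" using e by (intro \<sigma>_strict) auto
        then show False using s ys_spec[of s] by simp
      qed
      then show "dist (V s) (-1) < e" using ys_spec[of s] e unfolding V_def dist_real_def by simp
    qed
    then show "eventually (\<lambda>s. dist (V s) (-1) < e) at_bot"
      unfolding eventually_at_bot_linorder by blast
  qed
  moreover have "filterlim V at_bot at_top"
    unfolding filterlim_at_bot
  proof
    fix Z :: real
    define M where "M = max 1 (-1 - Z)"
    have "\<forall>s\<ge>\<sigma> M. V s \<le> Z"
    proof (intro allI impI)
      fix s assume s: "\<sigma> M \<le> s"
      have "M \<le> ys s"
      proof (rule ccontr)
        assume "\<not> M \<le> ys s"
        then have "\<sigma> (ys s) < \<sigma> M" using ys_spec[of s] by (intro \<sigma>_strict) auto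
        then show False using s ys_spec[of s] by simp
      qed
      then show "V s \<le> Z" unfolding V_def M_def by simp
    qed
    then show "eventually (\<lambda>s. V s \<le> Z) at_top" unfolding eventually_at_top_linorder by blast
  qed
  ultimately have "is_bvp_solution V" unfolding is_bvp_solution_def by blast
  then show ?thesis by blast
qed


lemma sol_of: assumes "is_bvp_solution V" shows "\<exists>a b. sol V a b"
proof -
  obtain a b where ab: "\<forall>s. (V has_real_derivative a s) (at s)
                  \<and> (a has_real_derivative b s) (at s)
                  \<and> b s - 3 * a s = R (V s)"
    and l1: "(V \<longlongrightarrow> -1) at_bot" and l2: "filterlim V at_bot at_top"
    using assms unfolding is_bvp_solution_def by blast
  have "sol V a b" by unfold_locales (use ab l1 l2 in auto)
  then show ?thesis by blast
qed

theorem lemma4p6: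
  shows "(\<exists>V. is_bvp_solution V) \<and>
         (\<forall>V1 V2. is_bvp_solution V1 \<longrightarrow> is_bvp_solution V2 \<longrightarrow>
            (\<exists>s0::real. \<forall>s. V1 s = V2 (s + s0)))"
proof
  show "\<exists>V. is_bvp_solution V" by (rule existence)
  show "\<forall>V1 V2. is_bvp_solution V1 \<longrightarrow> is_bvp_solution V2 \<longrightarrow>
            (\<exists>s0::real. \<forall>s. V1 s = V2 (s + s0))"
  proof (intro allI impI)
    fix V1 V2 assume h1: "is_bvp_solution V1" and h2: "is_bvp_solution V2"
    obtain a1 b1 where s1: "sol V1 a1 b1" using sol_of[OF h1] by blast
    obtain a2 b2 where s2: "sol V2 a2 b2" using sol_of[OF h2] by blast
    show "\<exists>s0::real. \<forall>s. V1 s = V2 (s + s0)" by (rule uniq[OF s1 s2])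
  qed
qed

end
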